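(* Let $\Gamma$ be a subgroup of $\mathbb{R}$ commensurable with $\mathbb{Z}$ (i.e. an arithmetic lattice for $G(\mathbb{Z})=\mathbb{Z}$, $G(\mathbb{R})=\mathbb{R}$). Then $\log(\mathbf{C}_n(\Gamma,\mathbb{R})) \simeq \log(n)$. More precisely, $$ n (\log n)^{\log 2} \preceq \mathbf{C}_n(\Gamma,\mathbb{R}) \preceq n \log n. $$
   Context: For subgroups $\Delta_1,\Delta_2$ of a group, $c(\Delta_1,\Delta_2) = [\Delta_1:\Delta_1\cap\Delta_2][\Delta_2:\Delta_1\cap\Delta_2]$. $\mathbf{C}_n(\Gamma,\mathbb{R})$ is the number of subgroups $\Delta \leq \mathbb{R}$ with $c(\Gamma,\Delta) \leq n$. For functions $f,g$ on $\mathbb{N}$, $f \preceq g$ means there exists $C>0$ with $f(n) \leq C g(Cn)$ for all $n$; $f \simeq g$ means $f\preceq g$ and $g \preceq f$. $\log$ denotes the natural logarithm. *)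

theory Defs
  imports Complex_Main
begin

definition add_subgroup :: "real set \<Rightarrow> bool" where
  "add_subgroup S \<longleftrightarrow> 0 \<in> S \<and> (\<forall>x\<in>S. \<forall>y\<in>S. x + y \<in> S) \<and> (\<forall>x\<in>S. - x \<in> S)"

definition rel_cosets :: "real set \<Rightarrow> real set \<Rightarrow> real set set" where
  "rel_cosets A B = {{x + y | y. y \<in> A \<inter> B} | x. x \<in> A}"

definition rel_index :: "real set \<Rightarrow> real set \<Rightarrow> nat" where
  "rel_index A B = card (rel_cosets A B)"

definition commensurable :: "real set \<Rightarrow> real set \<Rightarrow> bool" where
  "commensurable A B \<longleftrightarrow> finite (rel_cosets A B) \<and> finite (rel_cosets B A)"

text \<open>c(A,B) = [A : A\<inter>B][B : A\<inter>B] (only meaningful when commensurable;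
  otherwise c is infinite).\<close>
definition cval :: "real set \<Rightarrow> real set \<Rightarrow> nat" where
  "cval A B = rel_index A B * rel_index B A"

text \<open>C_n(\<Gamma>, \<real>): number of subgroups \<Delta> of \<real> with c(\<Gamma>,\<Delta>) \<le> n
  (c is finite exactly when \<Gamma>, \<Delta> are commensurable).\<close>
definition Cn :: "real set \<Rightarrow> nat \<Rightarrow> nat" where
  "Cn \<Gamma> n = card {\<Delta>. add_subgroup \<Delta> \<and> commensurable \<Gamma> \<Delta> \<and> cval \<Gamma> \<Delta> \<le> n}"

definition preceq :: "(nat \<Rightarrow> real) \<Rightarrow> (nat \<Rightarrow> real) \<Rightarrow> bool" where
  "preceq f g \<longleftrightarrow> (\<exists>C::nat. C > 0 \<and> (\<forall>n. f n \<le> real C * g (C * n)))"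

definition simeq :: "(nat \<Rightarrow> real) \<Rightarrow> (nat \<Rightarrow> real) \<Rightarrow> bool" where
  "simeq f g \<longleftrightarrow> preceq f g \<and> preceq g f"

end

theory Submission
  imports Defs "HOL-Analysis.Harmonic_Numbers"
begin

definition mZ :: "real \<Rightarrow> real set" where "mZ u = range (\<lambda>i::int. u * of_int i)"

lemma mZ_iff: "z \<in> mZ u \<longleftrightarrow> (\<exists>i::int. z = u * of_int i)" by (auto simp: mZ_def)

lemma mZ_sub: "add_subgroup (mZ u)"
  unfolding add_subgroup_def
proof (intro conjI ballI)
  show "0 \<in> mZ u" unfolding mZ_iff by (rule exI[of _ 0]) simp
next
  fix x y assume "x \<in> mZ u" "y \<in> mZ u"
  then obtain i j where "x = u * of_int i" "y = u * of_int j" by (auto simp: mZ_iff)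
  then show "x + y \<in> mZ u" unfolding mZ_iff by (intro exI[of _ "i+j"]) (simp add: algebra_simps)
next
  fix x assume "x \<in> mZ u"
  then obtain i where "x = u * of_int i" by (auto simp: mZ_iff)
  then show "- x \<in> mZ u" unfolding mZ_iff by (intro exI[of _ "-i"]) (simp add: algebra_simps)
qed

lemma sg_zero: "add_subgroup H \<Longrightarrow> 0 \<in> H" by (simp add: add_subgroup_def)
lemma sg_add: "add_subgroup H \<Longrightarrow> x \<in> H \<Longrightarrow> y \<in> H \<Longrightarrow> x + y \<in> H" by (simp add: add_subgroup_def)
lemma sg_neg: "add_subgroup H \<Longrightarrow> x \<in> H \<Longrightarrow> - x \<in> H" by (simp add: add_subgroup_def)
lemma sg_diff: "add_subgroup H \<Longrightarrow> x \<in> H \<Longrightarrow> y \<in> H \<Longrightarrow> x - y \<in> H"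
  using sg_add[of H x "-y"] sg_neg[of H y] by simp
lemma sg_inter: "add_subgroup A \<Longrightarrow> add_subgroup B \<Longrightarrow> add_subgroup (A \<inter> B)"
  by (simp add: add_subgroup_def)
lemma sg_nat_mult: "add_subgroup H \<Longrightarrow> x \<in> H \<Longrightarrow> of_nat n * x \<in> H"
proof (induction n)
  case 0 then show ?case by (simp add: sg_zero)
next
  case (Suc n)
  have "of_nat (Suc n) * x = of_nat n * x + x" by (simp add: algebra_simps)
  then show ?case using Suc sg_add by metis
qed
lemma sg_int_mult: "add_subgroup H \<Longrightarrow> x \<in> H \<Longrightarrow> of_int i * x \<in> H"
proof (cases "i \<ge> 0")
  case True
  assume "add_subgroup H" "x \<in> H"
  then show ?thesis using True sg_nat_mult[of H x "nat i"] by simp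
next
  case False
  assume a: "add_subgroup H" "x \<in> H"
  have "of_int i * x = - (of_nat (nat (-i)) * x)" using False by simp
  then show ?thesis using a sg_nat_mult[of H x "nat (-i)"] sg_neg by metis
qed

lemma coset_eq_iff:
  assumes "add_subgroup H"
  shows "({x + y |y. y \<in> H} = {x' + y |y. y \<in> H}) \<longleftrightarrow> x - x' \<in> H"
proof
  assume e: "{x + y |y. y \<in> H} = {x' + y |y. y \<in> H}"
  have "x + 0 \<in> {x + y |y. y \<in> H}" using sg_zero[OF assms] by blast
  then have "x \<in> {x' + y |y. y \<in> H}" using e by simp
  then obtain y where "y \<in> H" "x = x' + y" by blast
  then show "x - x' \<in> H" by simp
next
  assume h: "x - x' \<in> H"
  show "{x + y |y. y \<in> H} = {x' + y |y. y \<in> H}"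
  proof safe
    fix y assume "y \<in> H"
    then have "(x - x') + y \<in> H" using sg_add[OF assms h] by simp
    moreover have "x + y = x' + ((x - x') + y)" by simp
    ultimately show "\<exists>y'. x + y = x' + y' \<and> y' \<in> H" by blast
  next
    fix y assume "y \<in> H"
    then have "y - (x - x') \<in> H" using sg_diff[OF assms _ h] by simp
    moreover have "x' + y = x + (y - (x - x'))" by simp
    ultimately show "\<exists>y'. x' + y = x + y' \<and> y' \<in> H" by blast
  qed
qed

lemma coset_card:
  assumes u: "u > 0" and k: "k > 0" and I: "mZ u \<inter> C = mZ (u * of_nat k)"
  shows "finite (rel_cosets (mZ u) C) \<and> card (rel_cosets (mZ u) C) = k"
proof -
  define H where "H = mZ (u * of_nat k)"
  define cs where "cs x = {x + y |y. y \<in> H}" for x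
  have sH: "add_subgroup H" unfolding H_def by (rule mZ_sub)
  have R: "rel_cosets (mZ u) C = (\<lambda>i. cs (u * of_int i)) ` {0..<int k}"
  proof safe
    fix X assume "X \<in> rel_cosets (mZ u) C"
    then obtain x where x: "x \<in> mZ u" "X = cs x" unfolding rel_cosets_def cs_def I H_def by blast
    then obtain i where i: "x = u * of_int i" by (auto simp: mZ_iff)
    have "x - u * of_int (i mod int k) = u * of_nat k * of_int (i div int k)"
    proof -
      have "i = i div int k * int k + i mod int k" by simp
      then have "of_int i = (of_int (i div int k) * of_nat k + of_int (i mod int k) :: real)"
        by (metis of_int_add of_int_mult of_int_of_nat_eq)
      then show ?thesis unfolding i by (simp add: algebra_simps)
    qed
    then have "x - u * of_int (i mod int k) \<in> H" unfolding H_def mZ_iff by blast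
    then have "cs x = cs (u * of_int (i mod int k))" unfolding cs_def using coset_eq_iff[OF sH] by blast
    moreover have "i mod int k \<in> {0..<int k}" using k by simp
    ultimately show "X \<in> (\<lambda>i. cs (u * of_int i)) ` {0..<int k}" using x by blast
  next
    fix i :: int
    have "u * of_int i \<in> mZ u" unfolding mZ_iff by blast
    then show "cs (u * of_int i) \<in> rel_cosets (mZ u) C"
      unfolding rel_cosets_def cs_def I H_def by blast
  qed
  have inj: "inj_on (\<lambda>i. cs (u * of_int i)) {0..<int k}"
  proof (rule inj_onI)
    fix i j assume ij: "i \<in> {0..<int k}" "j \<in> {0..<int k}" "cs (u * of_int i) = cs (u * of_int j)"
    then have "u * of_int i - u * of_int j \<in> H" unfolding cs_def using coset_eq_iff[OF sH] by blast
    then obtain l where l: "u * of_int i - u * of_int j = u * of_nat k * of_int l" unfolding H_def mZ_iff by blast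
    then have "u * (of_int (i - j)) = u * of_int (int k * l)" by (simp add: algebra_simps)
    then have "(of_int (i - j) :: real) = of_int (int k * l)" using u by simp
    then have e: "i - j = int k * l" by linarith
    show "i = j"
    proof (rule ccontr)
      assume "i \<noteq> j"
      then have "l \<noteq> 0" using e by auto
      then have "\<bar>int k * l\<bar> \<ge> int k" using k by (simp add: abs_mult mult_le_cancel_left1)
      then show False using e ij by auto
    qed
  qed
  show ?thesis unfolding R using card_image[OF inj] by simp
qed

lemma pigeon:
  assumes A: "add_subgroup A" and B: "add_subgroup B" and f: "finite (rel_cosets A B)" and x: "x \<in> A"
  shows "\<exists>d::nat. 1 \<le> d \<and> d \<le> card (rel_cosets A B) \<and> of_nat d * x \<in> B"
proof -
  define m where "m = card (rel_cosets A B)"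
  define cs where "cs j = {of_nat j * x + y |y. y \<in> A \<inter> B}" for j :: nat
  have sub: "cs ` {0..m} \<subseteq> rel_cosets A B"
  proof
    fix X assume "X \<in> cs ` {0..m}"
    then obtain j where "X = cs j" by auto
    moreover have "of_nat j * x \<in> A" using sg_nat_mult[OF A x] .
    ultimately show "X \<in> rel_cosets A B" unfolding rel_cosets_def cs_def by blast
  qed
  have "\<not> inj_on cs {0..m}"
  proof
    assume "inj_on cs {0..m}"
    then have "card (cs ` {0..m}) = m + 1" by (simp add: card_image)
    moreover have "card (cs ` {0..m}) \<le> m" using card_mono[OF f sub] unfolding m_def by simp
    ultimately show False by simp
  qed
  then obtain j1 j2 where j: "j1 \<in> {0..m}" "j2 \<in> {0..m}" "j1 \<noteq> j2" "cs j1 = cs j2"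
    unfolding inj_on_def by blast
  have sAB: "add_subgroup (A \<inter> B)" using sg_inter[OF A B] .
  have key: "\<exists>d::nat. 1 \<le> d \<and> d \<le> card (rel_cosets A B) \<and> of_nat d * x \<in> B"
    if ab: "a \<in> {0..m}" "b \<in> {0..m}" "a < b" "cs a = cs b" for a b
  proof -
    have "of_nat b * x - of_nat a * x \<in> A \<inter> B" using ab
      unfolding cs_def using coset_eq_iff[OF sAB] by blast
    moreover have "of_nat b * x - of_nat a * x = of_nat (b - a) * x"
      using ab(3) by (simp add: of_nat_diff algebra_simps)
    ultimately show ?thesis using ab unfolding m_def
      by (intro exI[of _ "b - a"]) auto
  qed
  show ?thesis
  proof (cases "j1 < j2")
    case True then show ?thesis using key j by blast
  next
    case False then have "j2 < j1" using j by auto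
    then show ?thesis using key j by metis
  qed
qed

lemma mZ_inter:
  assumes r: "r > 0" and a: "a > 0" and b: "b > 0" and c: "coprime a b"
  shows "mZ r \<inter> mZ (r * of_nat a / of_nat b) = mZ (r * of_nat a)"
proof safe
  fix z assume z1: "z \<in> mZ r" and z2: "z \<in> mZ (r * of_nat a / of_nat b)"
  obtain i where i: "z = r * of_int i" using z1 by (auto simp: mZ_iff)
  obtain j where j: "z = r * of_nat a / of_nat b * of_int j" using z2 by (auto simp: mZ_iff)
  have "r * (of_nat b * of_int i) = r * (of_nat a * of_int j)" using i j b by (simp add: field_simps) (metis mult.commute)
  then have "(of_nat b * of_int i :: real) = of_nat a * of_int j" using r by simp
  then have "(of_int (int b * i) :: real) = of_int (int a * j)" by simp
  then have e: "int b * i = int a * j" by linarith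
  have "coprime (int a) (int b)" using c by simp
  moreover have "int a dvd int b * i" using e by simp
  ultimately have "int a dvd i" using coprime_dvd_mult_right_iff by blast
  then obtain l where "i = int a * l" by blast
  then show "z \<in> mZ (r * of_nat a)" unfolding mZ_iff i by (intro exI[of _ l]) simp
next
  fix z assume "z \<in> mZ (r * of_nat a)"
  then obtain l where l: "z = r * of_nat a * of_int l" by (auto simp: mZ_iff)
  show "z \<in> mZ r" unfolding mZ_iff l by (intro exI[of _ "int a * l"]) simp
  show "z \<in> mZ (r * of_nat a / of_nat b)" unfolding mZ_iff l using b
    by (intro exI[of _ "int b * l"]) (simp add: field_simps)
qed

lemma mZ_self: "u \<in> mZ u" unfolding mZ_iff by (intro exI[of _ 1]) simp

lemma mZ_gen_eq:
  assumes "u > 0" "v > 0" "mZ u = mZ v" shows "u = v"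
proof -
  have uv: "u \<in> mZ v" "v \<in> mZ u" using assms(3) mZ_self by blast+
  obtain i where i: "u = v * of_int i" using uv(1) unfolding mZ_iff by blast
  obtain j where j: "v = u * of_int j" using uv(2) unfolding mZ_iff by blast
  have "u * 1 = u * (of_int j * of_int i)" using i j by (simp add: algebra_simps)
  then have "(of_int (j * i) :: real) = 1" using assms(1) by (metis mult_left_cancel of_int_mult less_irrefl)
  then have ji: "j * i = 1" by linarith
  moreover have "i > 0"
  proof -
    have "v * of_int i > 0" using i assms by simp
    then have "(of_int i :: real) > 0" using assms(2) by (simp add: zero_less_mult_iff)
    then show ?thesis by simp
  qed
  ultimately have "i = 1" by (simp add: zmult_eq_1_iff)
  then show ?thesis using i by simp
qed

lemma struct_lem:
  assumes r: "r > 0" and B: "add_subgroup B"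
    and f1: "finite (rel_cosets (mZ r) B)" and f2: "finite (rel_cosets B (mZ r))"
  shows "\<exists>a b::nat. a > 0 \<and> b > 0 \<and> coprime a b \<and> B = mZ (r * of_nat a / of_nat b)"
proof -
  define m where "m = card (rel_cosets B (mZ r))"
  define M :: nat where "M = fact m"
  have M0: "M > 0" unfolding M_def by simp
  have sub: "x \<in> mZ (r / of_nat M)" if x: "x \<in> B" for x
  proof -
    obtain d :: nat where d: "1 \<le> d" "d \<le> m" "of_nat d * x \<in> mZ r"
      using pigeon[OF B mZ_sub f2 x] unfolding m_def by blast
    obtain i where i: "of_nat d * x = r * of_int i" using d(3) by (auto simp: mZ_iff)
    have "d dvd M" unfolding M_def using dvd_fact[OF d(1,2)] .
    then obtain e where e: "M = d * e" by blast
    have x1: "x = r * of_int i / of_nat d" using i d(1) by (simp add: field_simps)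
    have e0: "e > 0" using e M0 by (cases e) auto
    have "x = r / of_nat M * of_int (i * int e)"
      unfolding x1 e using e0 d(1) by (simp add: field_simps)
    then show ?thesis unfolding mZ_iff by blast
  qed
  obtain d :: nat where d: "1 \<le> d" "of_nat d * r \<in> B"
    using pigeon[OF mZ_sub B f1 mZ_self] by blast
  define I where "I = {i::int. r / of_nat M * of_int i \<in> B}"
  obtain i0 where i0: "of_nat d * r = r / of_nat M * of_int i0" using sub[OF d(2)] by (auto simp: mZ_iff)
  have "i0 \<noteq> 0" using i0 d r by auto
  have "i0 \<in> I" using i0 d(2) unfolding I_def by simp
  have "- i0 \<in> I" using sg_neg[OF B \<open>i0 \<in> I\<close>[unfolded I_def, simplified]] unfolding I_def by simp
  have ex: "\<exists>t::nat. t > 0 \<and> int t \<in> I"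
  proof (cases "i0 > 0")
    case True then show ?thesis using \<open>i0 \<in> I\<close> by (intro exI[of _ "nat i0"]) simp
  next
    case False then show ?thesis using \<open>- i0 \<in> I\<close> \<open>i0 \<noteq> 0\<close> by (intro exI[of _ "nat (- i0)"]) simp
  qed
  define t where "t = (LEAST t::nat. t > 0 \<and> int t \<in> I)"
  have t: "t > 0" "int t \<in> I" using LeastI_ex[OF ex] unfolding t_def by auto
  have tmin: "t \<le> s" if "s > 0" "int s \<in> I" for s unfolding t_def using that by (intro Least_le) simp
  define g where "g = r / of_nat M * of_nat t"
  have gB: "g \<in> B" using t(2) unfolding I_def g_def by simp
  have BZ: "B = mZ g"
  proof safe
    fix z assume z: "z \<in> B"
    then obtain i where i: "z = r / of_nat M * of_int i" using sub by (auto simp: mZ_iff)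
    have "r / of_nat M * of_int (i mod int t) = z - of_int (i div int t) * g"
    proof -
      have h0: "real_of_int i = real_of_int (int t * (i div int t) + i mod int t)" by simp
      have h: "real_of_int i = real t * real_of_int (i div int t) + real_of_int (i mod int t)"
        using h0 by (simp only: of_int_add of_int_mult of_int_of_nat_eq)
      show ?thesis unfolding i g_def h by (simp add: algebra_simps)
    qed
    moreover have "z - of_int (i div int t) * g \<in> B" using sg_diff[OF B z sg_int_mult[OF B gB]] .
    ultimately have im: "i mod int t \<in> I" unfolding I_def by simp
    have "i mod int t = 0"
    proof (rule ccontr)
      assume "i mod int t \<noteq> 0"
      then have "nat (i mod int t) > 0" using t(1) by (simp add: order_le_neq_trans)
      moreover have "int (nat (i mod int t)) \<in> I" using im t(1) by simp
      ultimately have "t \<le> nat (i mod int t)" using tmin by blast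
      moreover have "i mod int t < int t" "0 \<le> i mod int t" using t(1) by simp_all
      ultimately show False by linarith
    qed
    then have "i = int t * (i div int t)" by (metis add.right_neutral mult_div_mod_eq)
    then have "z = g * of_int (i div int t)" unfolding i g_def by (metis mult.assoc of_int_mult of_int_of_nat_eq)
    then show "z \<in> mZ g" unfolding mZ_iff by blast
  next
    fix z assume "z \<in> mZ g"
    then obtain i where "z = g * of_int i" by (auto simp: mZ_iff)
    then show "z \<in> B" using sg_int_mult[OF B gB, of i] by (simp add: mult.commute)
  qed
  define gg where "gg = gcd t M"
  define a where "a = t div gg"
  define b where "b = M div gg"
  have cop: "coprime a b" unfolding a_def b_def gg_def using div_gcd_coprime t(1) by blast
  have gg0: "gg > 0" unfolding gg_def using t(1) by simp
  have ta: "t = a * gg" unfolding a_def gg_def by simp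
  have Mb: "M = b * gg" unfolding b_def gg_def by simp
  have a0: "a > 0" using ta t(1) by (cases a) auto
  have b0: "b > 0" using Mb M0 by (cases b) auto
  have "g = r * of_nat a / of_nat b" unfolding g_def ta Mb using gg0 by simp
  then show ?thesis using a0 b0 cop BZ by blast
qed

definition Qs :: "nat \<Rightarrow> (nat \<times> nat) set" where
  "Qs n = {(a,b). 0 < a \<and> 0 < b \<and> coprime a b \<and> a * b \<le> n}"

lemma Qs_finite: "finite (Qs n)"
proof -
  have "Qs n \<subseteq> {..n} \<times> {..n}"
  proof
    fix p assume "p \<in> Qs n"
    then obtain a b where p: "p = (a,b)" "0 < a" "0 < b" "a * b \<le> n" unfolding Qs_def by blast
    have "a \<le> a * b" "b \<le> a * b" using p by simp_all
    then have "a \<le> n" "b \<le> n" using p(4) by linarith+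
    then show "p \<in> {..n} \<times> {..n}" using p(1) by simp
  qed
  then show ?thesis by (rule finite_subset) simp
qed

lemma comm_sym: "commensurable A B = commensurable B A"
  unfolding commensurable_def by blast

lemma Gamma_form:
  assumes "add_subgroup \<Gamma>" "commensurable \<Gamma> \<int>"
  shows "\<exists>r>0. \<Gamma> = mZ r"
proof -
  have Z: "(\<int>::real set) = mZ 1" by (simp add: mZ_def Ints_def)
  have "commensurable (mZ 1) \<Gamma>" using assms(2) comm_sym Z by metis
  then obtain a b :: nat where ab: "a > 0" "b > 0" "\<Gamma> = mZ (1 * of_nat a / of_nat b)"
    using struct_lem[of 1 \<Gamma>] assms(1) unfolding commensurable_def by auto
  then show ?thesis by (intro exI[of _ "of_nat a / of_nat b"]) simp
qed

lemma cval_form: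
  assumes r: "r > 0" and a: "a > 0" and b: "b > 0" and c: "coprime a b"
  shows "commensurable (mZ r) (mZ (r * of_nat a / of_nat b)) \<and>
         cval (mZ r) (mZ (r * of_nat a / of_nat b)) = a * b"
proof -
  define v where "v = r * of_nat a / of_nat b"
  have v: "v > 0" unfolding v_def using r a b by simp
  have I1: "mZ r \<inter> mZ v = mZ (r * of_nat a)" unfolding v_def using mZ_inter[OF r a b c] .
  have vb: "v * of_nat b = r * of_nat a" unfolding v_def using b by simp
  have I2: "mZ v \<inter> mZ r = mZ (v * of_nat b)" unfolding vb using I1 by (simp add: Int_commute)
  have C1: "finite (rel_cosets (mZ r) (mZ v)) \<and> card (rel_cosets (mZ r) (mZ v)) = a"
    using coset_card[OF r a I1] .
  have C2: "finite (rel_cosets (mZ v) (mZ r)) \<and> card (rel_cosets (mZ v) (mZ r)) = b"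
    using coset_card[OF v b I2] .
  show ?thesis using C1 C2 unfolding v_def[symmetric] commensurable_def cval_def rel_index_def by simp
qed

lemma frac_inj:
  fixes a b a' b' :: nat
  assumes "0 < a" "0 < b" "coprime a b" "0 < a'" "0 < b'" "coprime a' b'" "a * b' = a' * b"
  shows "a = a' \<and> b = b'"
proof -
  have "a dvd a' * b" using assms(7) by (metis dvd_triv_left)
  then have "a dvd a'" using assms(3) by (simp add: coprime_dvd_mult_left_iff)
  have "a' dvd a * b'" using assms(7) by (metis dvd_triv_left)
  then have "a' dvd a" using assms(6) by (simp add: coprime_dvd_mult_left_iff)
  have "a = a'" using \<open>a dvd a'\<close> \<open>a' dvd a\<close> by (rule dvd_antisym)
  then show ?thesis using assms by simp
qed

lemma Cn_eq:
  assumes r: "r > 0"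
  shows "Cn (mZ r) n = card (Qs n)"
proof -
  define F where "F = (\<lambda>(a,b). mZ (r * of_nat a / of_nat b))"
  have S: "{\<Delta>. add_subgroup \<Delta> \<and> commensurable (mZ r) \<Delta> \<and> cval (mZ r) \<Delta> \<le> n} = F ` Qs n"
  proof safe
    fix \<Delta> assume D: "add_subgroup \<Delta>" "commensurable (mZ r) \<Delta>" "cval (mZ r) \<Delta> \<le> n"
    then obtain a b :: nat where ab: "a > 0" "b > 0" "coprime a b" "\<Delta> = mZ (r * of_nat a / of_nat b)"
      using struct_lem[OF r D(1)] unfolding commensurable_def by blast
    have "a * b \<le> n" using D(3) cval_form[OF r ab(1-3)] ab(4) by simp
    then have "(a,b) \<in> Qs n" using ab unfolding Qs_def by simp
    then show "\<Delta> \<in> F ` Qs n" unfolding F_def using ab(4) by force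
  next
    fix a b assume "(a,b) \<in> Qs n"
    then have ab: "a > 0" "b > 0" "coprime a b" "a * b \<le> n" unfolding Qs_def by auto
    show "add_subgroup (F (a,b))" unfolding F_def by (simp add: mZ_sub)
    show "commensurable (mZ r) (F (a,b))" "cval (mZ r) (F (a,b)) \<le> n"
      unfolding F_def using cval_form[OF r ab(1-3)] ab(4) by simp_all
  qed
  have inj: "inj_on F (Qs n)"
  proof (rule inj_onI)
    fix p q assume p: "p \<in> Qs n" and q: "q \<in> Qs n" and e: "F p = F q"
    obtain a b where pab: "p = (a,b)" "0 < a" "0 < b" "coprime a b" using p unfolding Qs_def by blast
    obtain a' b' where qab: "q = (a',b')" "0 < a'" "0 < b'" "coprime a' b'" using q unfolding Qs_def by blast
    have "mZ (r * of_nat a / of_nat b) = mZ (r * of_nat a' / of_nat b')" using e pab qab unfolding F_def by simp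
    then have "r * of_nat a / of_nat b = r * of_nat a' / of_nat b'"
      using r pab qab by (intro mZ_gen_eq) simp_all
    then have "r * (of_nat a * of_nat b') = r * (of_nat a' * of_nat b)"
      using pab qab by (simp add: field_simps)
    then have "(of_nat (a * b') :: real) = of_nat (a' * b)" using r by simp
    then have "a * b' = a' * b" by (simp only: of_nat_eq_iff)
    then show "p = q" using frac_inj pab qab by blast
  qed
  show ?thesis unfolding Cn_def S using card_image[OF inj] .
qed

definition Ps :: "nat \<Rightarrow> (nat \<times> nat) set" where
  "Ps n = {(a,b). 0 < a \<and> 0 < b \<and> a * b \<le> n}"

lemma Ps_Sigma: "Ps n = Sigma {1..n} (\<lambda>a. {1..n div a})"
proof safe
  fix a b assume "(a,b) \<in> Ps n"
  then have ab: "0 < a" "0 < b" "a * b \<le> n" unfolding Ps_def by auto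
  have "a \<le> a * b" using ab by simp
  then have "a \<le> n" using ab(3) by (rule le_trans)
  then show "a \<in> {1..n}" using ab by simp
  have "b \<le> n div a" using ab by (simp add: less_eq_div_iff_mult_less_eq mult.commute)
  then show "b \<in> {1..n div a}" using ab by simp
next
  fix a b assume "a \<in> {1..n}" "b \<in> {1..n div a}"
  then show "(a,b) \<in> Ps n" unfolding Ps_def
    by (simp add: less_eq_div_iff_mult_less_eq mult.commute)
qed

lemma Ps_finite: "finite (Ps n)" unfolding Ps_Sigma by simp

lemma Ps_card: "card (Ps n) = (\<Sum>a=1..n. n div a)"
  unfolding Ps_Sigma by (simp add: card_SigmaI)

lemma div_le_real: "real (n div a) \<le> real n / real a"
proof (cases "a = 0")
  case True then show ?thesis by simp
next
  case False
  have "n div a * a \<le> n" by simp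
  then have "real (n div a) * real a \<le> real n" by (metis of_nat_le_iff of_nat_mult)
  then show ?thesis using False by (simp add: le_divide_eq)
qed

lemma harm_upper: "n \<ge> 1 \<Longrightarrow> harm n \<le> ln (real n) + (1::real)"
  using euler_mascheroni_sequence_decreasing[of 1 n] by (simp add: harm_def)

lemma Ps_upper: "real (card (Ps n)) \<le> real n * (ln (real n) + 1)"
proof (cases "n = 0")
  case True then show ?thesis unfolding Ps_card by simp
next
  case False
  have "real (card (Ps n)) = (\<Sum>a=1..n. real (n div a))" unfolding Ps_card by simp
  also have "\<dots> \<le> (\<Sum>a=1..n. real n * inverse (real a))"
    by (intro sum_mono) (rule div_le_real[unfolded divide_inverse])
  also have "\<dots> = real n * harm n" by (simp add: harm_def sum_distrib_left)
  also have "\<dots> \<le> real n * (ln (real n) + 1)" using False harm_upper[of n] by (intro mult_left_mono) auto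
  finally show ?thesis .
qed

lemma Ps_lower: "real (card (Ps n)) \<ge> real n * ln (real n) - real n"
proof (cases "n = 0")
  case True then show ?thesis by simp
next
  case False
  have t: "real (n div a) \<ge> real n * inverse (real a) - 1" if "a \<in> {1..n}" for a
  proof -
    have a: "a > 0" using that by simp
    have "n = n div a * a + n mod a" by simp
    then have "real n = real (n div a) * real a + real (n mod a)" by (metis of_nat_add of_nat_mult)
    moreover have "real (n mod a) < real a" using a by simp
    ultimately have "real n < (real (n div a) + 1) * real a" by (simp add: algebra_simps)
    then have "real n / real a < real (n div a) + 1" using a by (simp add: divide_less_eq)
    then show ?thesis by (simp add: divide_inverse)
  qed
  have "real n * ln (real n) - real n \<le> real n * ln (real n + 1) - real n"
    using False by (intro diff_right_mono mult_left_mono) auto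
  also have "\<dots> \<le> real n * harm n - real n"
    using ln_le_harm[of n] by (intro diff_right_mono mult_left_mono) auto
  also have "\<dots> = (\<Sum>a=1..n. real n * inverse (real a) - 1)"
    by (simp add: harm_def sum_distrib_left sum_subtractf)
  also have "\<dots> \<le> (\<Sum>a=1..n. real (n div a))" by (intro sum_mono t)
  also have "\<dots> = real (card (Ps n))" unfolding Ps_card by simp
  finally show ?thesis .
qed

lemma Qs_sub_Ps: "Qs n \<subseteq> Ps n" unfolding Qs_def Ps_def by auto

lemma Qs_upper: "real (card (Qs n)) \<le> real n * (ln (real n) + 1)"
  using card_mono[OF Ps_finite Qs_sub_Ps, of n] Ps_upper[of n] by linarith

lemma Qs_ge_n: "card (Qs n) \<ge> n"
proof -
  have "(\<lambda>b. (1::nat, b)) ` {1..n} \<subseteq> Qs n" unfolding Qs_def by auto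
  then have "card ((\<lambda>b. (1::nat, b)) ` {1..n}) \<le> card (Qs n)" using Qs_finite by (rule card_mono[rotated])
  moreover have "card ((\<lambda>b. (1::nat, b)) ` {1..n}) = n" by (simp add: card_image inj_on_def)
  ultimately show ?thesis by simp
qed

lemma decomp: "card (Ps n) \<le> (\<Sum>g=1..n. card (Qs (n div g^2)))"
proof -
  define h where "h = (\<lambda>(g::nat, (a::nat, b::nat)). (g * a, g * b))"
  have sub: "Ps n \<subseteq> h ` Sigma {1..n} (\<lambda>g. Qs (n div g^2))"
  proof
    fix p assume "p \<in> Ps n"
    then obtain x y where p: "p = (x,y)" "0 < x" "0 < y" "x * y \<le> n" unfolding Ps_def by blast
    define g where "g = gcd x y"
    have g0: "g > 0" unfolding g_def using p by simp
    define a where "a = x div g"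
    define b where "b = y div g"
    have cop: "coprime a b" unfolding a_def b_def g_def using div_gcd_coprime p(2) by blast
    have xa: "x = g * a" unfolding a_def g_def by simp
    have yb: "y = g * b" unfolding b_def g_def by simp
    have a0: "a > 0" using xa p(2) by (cases a) auto
    have b0: "b > 0" using yb p(3) by (cases b) auto
    have "a * b * g^2 \<le> n" using p(4) unfolding xa yb by (simp add: power2_eq_square algebra_simps)
    then have "a * b \<le> n div g^2" using g0 by (simp add: less_eq_div_iff_mult_less_eq)
    then have "(a,b) \<in> Qs (n div g^2)" using a0 b0 cop unfolding Qs_def by simp
    moreover have "g \<le> n"
    proof -
      have "g \<le> x" using xa b0 a0 by simp
      also have "x \<le> x * y" using p by simp
      finally show ?thesis using p(4) by simp
    qed
    ultimately have "(g,(a,b)) \<in> Sigma {1..n} (\<lambda>g. Qs (n div g^2))" using g0 by simp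
    moreover have "p = h (g,(a,b))" unfolding h_def p xa yb by simp
    ultimately show "p \<in> h ` Sigma {1..n} (\<lambda>g. Qs (n div g^2))" by blast
  qed
  have fin: "finite (Sigma {1..n} (\<lambda>g. Qs (n div g^2)))" using Qs_finite by simp
  have "card (Ps n) \<le> card (h ` Sigma {1..n} (\<lambda>g. Qs (n div g^2)))"
    using sub fin by (intro card_mono) auto
  also have "\<dots> \<le> card (Sigma {1..n} (\<lambda>g. Qs (n div g^2)))" using fin by (rule card_image_le)
  also have "\<dots> = (\<Sum>g=1..n. card (Qs (n div g^2)))" using Qs_finite by (simp add: card_SigmaI)
  finally show ?thesis .
qed

lemma inv_sq_step:
  fixes x :: real assumes x: "x > 0"
  shows "1 / (x + 1)^2 + 1 / (x + 1) \<le> 1 / x"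
proof -
  have e1: "1 / (x + 1)^2 + 1 / (x + 1) = (x + 2) / (x + 1)^2"
    using x by (simp add: divide_simps power2_eq_square)
  have e2: "(x + 2) / (x + 1)^2 = (x * (x + 2)) / (x * (x + 1)^2)"
    using x by (intro mult_divide_mult_cancel_left[symmetric]) simp
  have e3: "1 / x = (x + 1)^2 / (x * (x + 1)^2)" using x by (simp add: divide_simps)
  have "x * (x + 2) \<le> (x + 1)^2" by (simp add: power2_eq_square algebra_simps)
  then have "(x * (x + 2)) / (x * (x + 1)^2) \<le> (x + 1)^2 / (x * (x + 1)^2)"
    using x by (intro divide_right_mono) auto
  then show ?thesis using e1 e2 e3 by linarith
qed

lemma inv_sq_sum: "n \<ge> 2 \<Longrightarrow> (\<Sum>g=2..n. 1 / (real g)^2) \<le> 3/4 - 1 / real n"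
proof (induction n rule: nat_induct_at_least)
  case base then show ?case by simp
next
  case (Suc n)
  have s: "(\<Sum>g=2..Suc n. 1 / (real g)^2) = (\<Sum>g=2..n. 1 / (real g)^2) + 1 / (real n + 1)^2"
    using Suc(1) by simp
  have st: "1 / (real n + 1)^2 + 1 / (real n + 1) \<le> 1 / real n"
    using Suc(1) by (intro inv_sq_step) simp
  have r: "real (Suc n) = real n + 1" by simp
  show ?case unfolding s r using Suc(2) st by linarith
qed

lemma inv_sq_sum': "(\<Sum>g=2..n. 1 / (real g)^2) \<le> 3/4"
proof (cases "n \<ge> 2")
  case True then show ?thesis 
  proof -
    have "0 \<le> 1 / real n" by simp
    then show ?thesis using inv_sq_sum[OF True] by linarith
  qed
next
  case False then show ?thesis by simp
qed

lemma Qs_lower: "real (card (Qs n)) \<ge> real n * ln (real n) / 4 - 7 * real n / 4"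
proof (cases "n = 0")
  case True then show ?thesis by simp
next
  case False
  have L: "0 \<le> ln (real n) + 1" using False by simp
  have tm: "real (card (Qs (n div g^2))) \<le> real n * (ln (real n) + 1) * (1 / (real g)^2)"
    if "g \<in> {2..n}" for g
  proof -
    define M where "M = n div g^2"
    have g: "g \<ge> 1" using that by simp
    have M1: "real M \<le> real n / (real g)^2" unfolding M_def using div_le_real[of n "g^2"] by simp
    have "real M * (ln (real M) + 1) \<le> real M * (ln (real n) + 1)"
    proof (cases "M = 0")
      case True then show ?thesis by simp
    next
      case False
      have "M \<le> n" unfolding M_def by simp
      then have "ln (real M) \<le> ln (real n)" using False by simp
      then show ?thesis by (intro mult_left_mono) auto
    qed
    also have "\<dots> \<le> real n / (real g)^2 * (ln (real n) + 1)" using M1 L by (rule mult_right_mono)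
    finally show ?thesis using Qs_upper[of M] unfolding M_def by simp
  qed
  have "real (card (Ps n)) \<le> real (\<Sum>g=1..n. card (Qs (n div g^2)))" using decomp[of n] by linarith
  also have "\<dots> = real (card (Qs n)) + (\<Sum>g=2..n. real (card (Qs (n div g^2))))"
    using False by (simp add: sum.atLeast_Suc_atMost numeral_2_eq_2)
  also have "\<dots> \<le> real (card (Qs n)) + (\<Sum>g=2..n. real n * (ln (real n) + 1) * (1 / (real g)^2))"
    using tm by (intro add_left_mono sum_mono) auto
  also have "\<dots> = real (card (Qs n)) + real n * (ln (real n) + 1) * (\<Sum>g=2..n. 1 / (real g)^2)"
    by (simp add: sum_distrib_left)
  also have "\<dots> \<le> real (card (Qs n)) + real n * (ln (real n) + 1) * (3/4)"
    using inv_sq_sum'[of n] L by (intro add_left_mono mult_left_mono) auto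
  finally have "real (card (Ps n)) \<le> real (card (Qs n)) + real n * (ln (real n) + 1) * (3/4)" .
  then show ?thesis using Ps_lower[of n] by (simp add: algebra_simps)
qed

lemma ln3: "ln (3::real) \<ge> 1"
proof -
  have "ln (exp 1) \<le> ln (3::real)" using exp_le by (subst ln_le_cancel_iff) auto
  then show ?thesis by simp
qed

lemma powr_bound: "x \<ge> 0 \<Longrightarrow> x powr ln 2 \<le> 1 + (x::real)"
proof (cases "x \<le> 1")
  case True
  assume "x \<ge> 0"
  then have "x powr ln 2 \<le> 1" using True by (intro powr_le1) auto
  then show ?thesis using \<open>x \<ge> 0\<close> by linarith
next
  case False
  then have "x powr ln 2 \<le> x powr 1" using ln_2_less_1 by (intro powr_mono) auto
  then show ?thesis using False by simp
qed

lemma main_bounds: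
  fixes F :: "nat \<Rightarrow> nat"
  assumes FQ: "\<And>n. F n = card (Qs n)"
  shows "simeq (\<lambda>n. ln (real (F n))) (\<lambda>n. ln (real n)) \<and>
    preceq (\<lambda>n. real n * (ln (real n) powr ln 2)) (\<lambda>n. real (F n)) \<and>
    preceq (\<lambda>n. real (F n)) (\<lambda>n. real n * ln (real n))"
proof -
  have up: "real (F n) \<le> real n * (ln (real n) + 1)" for n using Qs_upper FQ by simp
  have geq: "real (F n) \<ge> real n" for n using Qs_ge_n FQ by simp
  have low: "real (F n) \<ge> real n * ln (real n) / 4 - 7 * real n / 4" for n using Qs_lower FQ by simp
  have F0: "F 0 = 0" using up[of 0] by simp
  have A: "preceq (\<lambda>n. ln (real (F n))) (\<lambda>n. ln (real n))"
    unfolding preceq_def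
  proof (intro exI[of _ 2] conjI allI)
    fix n :: nat
    show "ln (real (F n)) \<le> real 2 * ln (real (2 * n))"
    proof (cases "n = 0")
      case True then show ?thesis using F0 by simp
    next
      case False
      then have n1: "real n \<ge> 1" by simp
      have "ln (real n) \<le> real n - 1" using n1 by (intro ln_le_minus_one) simp
      then have "ln (real n) + 1 \<le> real n" by simp
      then have "real (F n) \<le> real n * real n" using up[of n] n1 by (meson order_trans mult_left_mono zero_le_one n1 order_trans[OF zero_le_one n1])
      moreover have "real (F n) > 0" using geq[of n] n1 by simp
      ultimately have "ln (real (F n)) \<le> ln (real n * real n)" by simp
      also have "\<dots> = 2 * ln (real n)" using n1 by (simp add: ln_mult)
      also have "\<dots> \<le> 2 * ln (real (2 * n))" using n1 by simp
      finally show ?thesis by simp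
    qed
  qed simp
  have B: "preceq (\<lambda>n. ln (real n)) (\<lambda>n. ln (real (F n)))"
    unfolding preceq_def
  proof (intro exI[of _ 1] conjI allI)
    fix n :: nat
    show "ln (real n) \<le> real 1 * ln (real (F (1 * n)))"
    proof (cases "n = 0")
      case True then show ?thesis using F0 by simp
    next
      case False then show ?thesis using geq[of n] by simp
    qed
  qed simp
  define C :: nat where "C = 3^8"
  have lnC: "ln (real C) \<ge> 8"
  proof -
    have rc: "real C = (3::real)^8" unfolding C_def by simp
    have "ln ((3::real)^8) = real 8 * ln 3" by (rule ln_realpow)
    then have "ln (real C) = 8 * ln 3" unfolding rc by simp
    then show ?thesis using ln3 by simp
  qed
  have Cpos: "real C \<ge> 4" unfolding C_def by simp
  have Cc: "preceq (\<lambda>n. real n * (ln (real n) powr ln 2)) (\<lambda>n. real (F n))"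
    unfolding preceq_def
  proof (intro exI[of _ C] conjI allI)
    show "C > 0" unfolding C_def by simp
    fix n :: nat
    show "real n * (ln (real n) powr ln 2) \<le> real C * real (F (C * n))"
    proof (cases "n = 0")
      case True then show ?thesis by simp
    next
      case False
      then have n1: "real n \<ge> 1" by simp
      have l0: "ln (real n) \<ge> 0" using n1 by simp
      have "real n * (ln (real n) powr ln 2) \<le> real n * (1 + ln (real n))"
        using powr_bound[OF l0] by (intro mult_left_mono) auto
      also have "\<dots> \<le> real C * real n * (1 + ln (real n)) / 4"
      proof -
        have t0: "0 \<le> real n * (1 + ln (real n))" using n1 l0 by simp
        have "1 * (real n * (1 + ln (real n))) \<le> (real C / 4) * (real n * (1 + ln (real n)))"
          using Cpos t0 by (intro mult_right_mono) auto
        moreover have "(real C / 4) * (real n * (1 + ln (real n))) = real C * real n * (1 + ln (real n)) / 4"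
          by simp
        ultimately show ?thesis by simp
      qed
      also have "\<dots> \<le> real (C * n) * ln (real (C * n)) / 4 - 7 * real (C * n) / 4"
      proof -
        have "ln (real (C * n)) = ln (real C) + ln (real n)" using n1 Cpos by (simp add: ln_mult)
        then have "real (C * n) * ln (real (C * n)) / 4 - 7 * real (C * n) / 4
                 = real C * real n * (ln (real C) - 7 + ln (real n)) / 4" by (simp add: algebra_simps)
        moreover have "real C * real n * (1 + ln (real n)) \<le> real C * real n * (ln (real C) - 7 + ln (real n))"
          using lnC Cpos n1 by (intro mult_left_mono) auto
        ultimately show ?thesis by simp
      qed
      also have "\<dots> \<le> real (F (C * n))" using low .
      also have "\<dots> \<le> real C * real (F (C * n))"
      proof -
        have "1 * real (F (C * n)) \<le> real C * real (F (C * n))"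
          using Cpos by (intro mult_right_mono) auto
        then show ?thesis by simp
      qed
      finally show ?thesis .
    qed
  qed
  have D: "preceq (\<lambda>n. real (F n)) (\<lambda>n. real n * ln (real n))"
    unfolding preceq_def
  proof (intro exI[of _ 3] conjI allI)
    fix n :: nat
    show "real (F n) \<le> real 3 * (real (3 * n) * ln (real (3 * n)))"
    proof (cases "n = 0")
      case True then show ?thesis using F0 by simp
    next
      case False
      then have n1: "real n \<ge> 1" by simp
      have l0: "ln (real n) \<ge> 0" using n1 by simp
      have "ln (real (3 * n)) = ln 3 + ln (real n)" using n1 by (simp add: ln_mult)
      then have "real 3 * (real (3 * n) * ln (real (3 * n))) = 9 * real n * (ln 3 + ln (real n))" by simp
      moreover have "real n * (ln (real n) + 1) \<le> 9 * real n * (ln 3 + ln (real n))"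
      proof -
        have "real n * (ln (real n) + 1) \<le> real n * (ln 3 + ln (real n))"
          using ln3 n1 by (intro mult_left_mono) auto
        also have "\<dots> \<le> 9 * (real n * (ln 3 + ln (real n)))"
          using ln3 n1 l0 by simp
        finally show ?thesis by simp
      qed
      ultimately show ?thesis using up[of n] by linarith
    qed
  qed simp
  show ?thesis unfolding simeq_def using A B Cc D by blast
qed

theorem proposition3:
  fixes \<Gamma> :: "real set"
  assumes "add_subgroup \<Gamma>"
    and "commensurable \<Gamma> \<int>"
  shows "simeq (\<lambda>n. ln (real (Cn \<Gamma> n))) (\<lambda>n. ln (real n)) \<and>
    preceq (\<lambda>n. real n * (ln (real n) powr ln 2)) (\<lambda>n. real (Cn \<Gamma> n)) \<and>
    preceq (\<lambda>n. real (Cn \<Gamma> n)) (\<lambda>n. real n * ln (real n))"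
proof -
  obtain r where r: "r > 0" "\<Gamma> = mZ r" using Gamma_form[OF assms] by blast
  have "\<And>n. Cn \<Gamma> n = card (Qs n)" using Cn_eq[OF r(1)] r(2) by simp
  then show ?thesis by (rule main_bounds)
qed

end
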